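(* Let $x_1,\dots,x_N$ be training data points, let $f(x,\theta)$ be a loss function differentiable in $\theta$, and fix $\theta_t$. Let $S_b\subseteq\{x_1,\dots,x_N\}$ be a random bucket, and conditionally on $S_b$ let $x_m$ be chosen uniformly at random from $S_b$. Let $p_i=\Pr(x_i\in S_b)>0$ and let $\mathbb{P}(x_i,x_j\in S_b)$ denote the probability that both $x_i$ and $x_j$ belong to $S_b$. For the estimator $$\mathrm{Est} = \frac{1}{N}\sum_{i=1}^N \mathbb{1}_{x_i\in S_b}\,\mathbb{1}_{(x_i = x_m \mid x_i\in S_b)}\,\frac{\nabla f(x_i,\theta_t)\cdot |S_b|}{p_i},$$ the trace of its covariance matrix $\Sigma(\mathrm{Est})$ equals $$\mathrm{Tr}(\Sigma(\mathrm{Est})) = \frac{1}{N^2}\sum_{i=1}^N \frac{\|\nabla f(x_i,\theta_t)\|_2^2\cdot \sum_{j=1}^N \frac{\mathbb{P}(x_i,x_j\in S_b)}{p_i}}{p_i} - \frac{1}{N^2}\Big\|\sum_{i=1}^N \nabla f(x_i,\theta_t)\Big\|_2^2.$$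
   Context: This is the LSH-sampled gradient estimator (LGD). Data points are preprocessed into locality-sensitive hash tables; at iteration $t$ the query (built from $\theta_t$) is hashed, a hash table is probed, and the matching non-empty bucket is $S_b$. The paper writes $p_i = cp(x_i,\theta_t)^K(1-cp(x_i,\theta_t)^K)^{l-1}$, with $cp$ the LSH collision probability, $K$ the number of concatenated hashes and $l$ the number of tables probed; in the statement $p_i$ denotes $\Pr(x_i\in S_b)$. $\mathbb{1}_{(x_i = x_m\mid x_i\in S_b)}$ is the indicator that $x_i$ is the element selected from the bucket. *)

theory Defs
  imports "HOL-Probability.Probability"
begin

definition trace_cov :: "'w pmf \<Rightarrow> ('w \<Rightarrow> 'v::euclidean_space) \<Rightarrow> real" where
  "trace_cov D X = (\<Sum>b\<in>Basis. measure_pmf.variance D (\<lambda>\<omega>. X \<omega> \<bullet> b))"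

definition bucket_then_uniform :: "nat set pmf \<Rightarrow> (nat set \<times> nat) pmf" where
  "bucket_then_uniform B = bind_pmf B (\<lambda>S. map_pmf (\<lambda>m. (S, m)) (pmf_of_set S))"

end

theory Submission
  imports Defs
begin

lemma norm_sq_basis: "(norm (v::'v::euclidean_space))^2 = (\<Sum>b\<in>Basis. (v \<bullet> b)^2)"
proof -
  have "(norm v)^2 = v \<bullet> v" by (rule power2_norm_eq_inner)
  also have "\<dots> = (\<Sum>b\<in>Basis. (v \<bullet> b) * (v \<bullet> b))" by (rule euclidean_inner)
  finally show ?thesis by (simp add: power2_eq_square)
qed

theorem theorem2:
  fixes N :: nat
    and x :: "nat \<Rightarrow> 'x"
    and f :: "'x \<Rightarrow> 'v::euclidean_space \<Rightarrow> real"
    and \<theta>t :: 'v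
    and grad :: "nat \<Rightarrow> 'v"
    and B :: "nat set pmf"
    and p :: "nat \<Rightarrow> real"
    and P2 :: "nat \<Rightarrow> nat \<Rightarrow> real"
    and Est :: "nat set \<times> nat \<Rightarrow> 'v"
  assumes grad: "\<And>i. i \<in> {1..N} \<Longrightarrow> (f (x i) has_derivative (\<lambda>h. grad i \<bullet> h)) (at \<theta>t)"
    and bucket: "\<And>S. S \<in> set_pmf B \<Longrightarrow> S \<subseteq> {1..N} \<and> S \<noteq> {}"
    and p_def: "\<And>i. p i = measure_pmf.prob B {S. i \<in> S}"
    and p_pos: "\<And>i. i \<in> {1..N} \<Longrightarrow> p i > 0"
    and P2_def: "\<And>i j. P2 i j = measure_pmf.prob B {S. i \<in> S \<and> j \<in> S}"
    and Est_def: "\<And>S m. Est (S, m) =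
        (1 / real N) *\<^sub>R (\<Sum>i=1..N. ((if i \<in> S then 1 else 0) * (if i = m then 1 else 0)
            * real (card S) / p i) *\<^sub>R grad i)"
  shows "trace_cov (bucket_then_uniform B) Est =
     (1 / (real N)^2) * (\<Sum>i=1..N. (norm (grad i))^2 * (\<Sum>j=1..N. P2 i j / p i) / p i)
     - (1 / (real N)^2) * (norm (\<Sum>i=1..N. grad i))^2"
proof -
  define SB where "SB = set_pmf B"
  define D where "D = bucket_then_uniform B"
  have SBsub: "SB \<subseteq> Pow {1..N}" using bucket SB_def by auto
  have finSB: "finite SB" using SBsub finite_subset by blast
  have finS: "S \<in> SB \<Longrightarrow> finite S" for S using bucket SB_def finite_subset by blast
  have neS: "S \<in> SB \<Longrightarrow> S \<noteq> {}" for S using bucket SB_def by blast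
  have setD: "set_pmf D \<subseteq> SB \<times> {1..N}"
    unfolding D_def bucket_then_uniform_def using finS neS bucket SB_def by auto
  have finD: "finite (set_pmf D)" using setD finSB finite_subset by blast
  have intD: "integrable (measure_pmf D) g" for g :: "_ \<Rightarrow> real"
    using finD integrable_measure_pmf_finite by blast
  have ED: "measure_pmf.expectation D g = (\<Sum>S\<in>SB. pmf B S * ((\<Sum>m\<in>S. g (S, m)) / card S))"
    for g :: "_ \<Rightarrow> real"
  proof -
    have "measure_pmf.expectation D g = (\<Sum>S\<in>SB. pmf B S *\<^sub>R
        measure_pmf.expectation (map_pmf (\<lambda>m. (S, m)) (pmf_of_set S)) g)"
      unfolding D_def bucket_then_uniform_def
      by (rule pmf_expectation_bind) (use finSB finS neS SB_def in auto)
    also have "\<dots> = (\<Sum>S\<in>SB. pmf B S * ((\<Sum>m\<in>S. g (S, m)) / card S))"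
      by (rule sum.cong[OF refl]) (simp add: integral_pmf_of_set finS neS)
    finally show ?thesis .
  qed
  have probB: "measure_pmf.prob B X = (\<Sum>S\<in>SB. pmf B S * (if S \<in> X then 1 else 0))" for X
  proof -
    have "measure_pmf.prob B X = measure_pmf.prob B (X \<inter> SB)"
      using measure_Int_set_pmf SB_def by metis
    also have "\<dots> = sum (pmf B) (SB \<inter> X)"
      using finSB by (simp add: measure_measure_pmf_finite Int_commute)
    also have "\<dots> = (\<Sum>S\<in>SB. pmf B S * (if S \<in> X then 1 else 0))"
      using finSB by (simp add: sum.inter_restrict if_distrib cong: if_cong)
    finally show ?thesis .
  qed
  have EstS: "Est (S, m) = (real (card S) / (real N * p m)) *\<^sub>R grad m"
    if "S \<in> SB" "m \<in> S" for S m
  proof -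
    have m: "m \<in> {1..N}" using that SBsub by blast
    have "(\<Sum>i=1..N. ((if i \<in> S then 1 else 0) * (if i = m then 1 else 0)
            * real (card S) / p i) *\<^sub>R grad i) = (\<Sum>i=1..N. (if i = m then (real (card S) / p m) *\<^sub>R grad m else 0))"
      by (rule sum.cong[OF refl]) (use that in auto)
    also have "\<dots> = (real (card S) / p m) *\<^sub>R grad m" using m by simp
    finally show ?thesis by (simp add: Est_def)
  qed
  have swap: "(\<Sum>S\<in>SB. \<Sum>m\<in>S. F S m) = (\<Sum>m=1..N. \<Sum>S\<in>SB. (if m \<in> S then F S m else 0))"
    for F :: "nat set \<Rightarrow> nat \<Rightarrow> real"
  proof -
    have "(\<Sum>S\<in>SB. \<Sum>m\<in>S. F S m) = (\<Sum>S\<in>SB. \<Sum>m=1..N. (if m \<in> S then F S m else 0))"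
    proof (rule sum.cong[OF refl])
      fix S assume "S \<in> SB"
      then have "S \<subseteq> {1..N}" using SBsub by auto
      then show "(\<Sum>m\<in>S. F S m) = (\<Sum>m=1..N. (if m \<in> S then F S m else 0))"
        by (simp add: sum.If_cases Int_absorb1 Int_absorb2)
    qed
    also have "\<dots> = (\<Sum>m=1..N. \<Sum>S\<in>SB. (if m \<in> S then F S m else 0))"
      by (rule sum.swap)
    finally show ?thesis .
  qed
  have pS: "p m = (\<Sum>S\<in>SB. (if m \<in> S then pmf B S else 0))" for m
    unfolding p_def probB by (rule sum.cong[OF refl]) auto
  have pS': "(\<Sum>S\<in>SB. (if m \<in> S then pmf B S * c else 0)) = p m * c" for m c
    unfolding pS sum_distrib_right by (rule sum.cong[OF refl]) auto
  have P2S: "P2 i j = (\<Sum>S\<in>SB. (if i \<in> S \<and> j \<in> S then pmf B S else 0))" for i j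
    unfolding P2_def probB by (rule sum.cong[OF refl]) auto
  define G where "G = (\<Sum>i=1..N. grad i)"
  have mean: "measure_pmf.expectation D (\<lambda>\<omega>. Est \<omega> \<bullet> b) = ((1 / real N) *\<^sub>R G) \<bullet> b" for b
  proof -
    have "measure_pmf.expectation D (\<lambda>\<omega>. Est \<omega> \<bullet> b)
        = (\<Sum>S\<in>SB. \<Sum>m\<in>S. pmf B S * ((grad m \<bullet> b) / (real N * p m)))"
      unfolding ED
    proof (rule sum.cong[OF refl])
      fix S assume S: "S \<in> SB"
      have c: "real (card S) > 0" using finS[OF S] neS[OF S] by (simp add: card_gt_0_iff)
      have "(\<Sum>m\<in>S. Est (S, m) \<bullet> b) = real (card S) * (\<Sum>m\<in>S. (grad m \<bullet> b) / (real N * p m))"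
        by (simp add: EstS[OF S] sum_distrib_left)
      then have "pmf B S * ((\<Sum>m\<in>S. Est (S, m) \<bullet> b) / real (card S)) =
          pmf B S * (\<Sum>m\<in>S. ((grad m \<bullet> b) / (real N * p m)))"
        using c by simp
      then show "pmf B S * ((\<Sum>m\<in>S. Est (S, m) \<bullet> b) / real (card S)) =
          (\<Sum>m\<in>S. pmf B S * ((grad m \<bullet> b) / (real N * p m)))"
        by (simp only: sum_distrib_left)
    qed
    also have "\<dots> = (\<Sum>m=1..N. \<Sum>S\<in>SB. (if m \<in> S then pmf B S * ((grad m \<bullet> b) / (real N * p m)) else 0))"
      by (rule swap)
    also have "\<dots> = (\<Sum>m=1..N. p m * ((grad m \<bullet> b) / (real N * p m)))"
      by (rule sum.cong[OF refl], rule pS')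
    also have "\<dots> = (\<Sum>m=1..N. (grad m \<bullet> b) / real N)"
      by (rule sum.cong[OF refl], drule p_pos, simp add: field_simps)
    also have "\<dots> = ((1 / real N) *\<^sub>R G) \<bullet> b"
      by (simp add: G_def inner_sum_left sum_divide_distrib)
    finally show ?thesis .
  qed
  have sq: "measure_pmf.expectation D (\<lambda>\<omega>. (norm (Est \<omega>))^2) =
      (1 / (real N)^2) * (\<Sum>i=1..N. (norm (grad i))^2 * (\<Sum>j=1..N. P2 i j / p i) / p i)"
  proof -
    have "measure_pmf.expectation D (\<lambda>\<omega>. (norm (Est \<omega>))^2)
        = (\<Sum>S\<in>SB. \<Sum>m\<in>S. pmf B S * real (card S) * ((norm (grad m))^2 / ((real N)^2 * (p m)^2)))"
      unfolding ED
    proof (rule sum.cong[OF refl])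
      fix S assume S: "S \<in> SB"
      have c: "real (card S) > 0" using finS[OF S] neS[OF S] by (simp add: card_gt_0_iff)
      have "(\<Sum>m\<in>S. (norm (Est (S, m)))^2) = real (card S) * (real (card S) * (\<Sum>m\<in>S. ((norm (grad m))^2 / ((real N)^2 * (p m)^2))))"
        unfolding sum_distrib_left
        by (rule sum.cong[OF refl]) (simp add: EstS[OF S] power_mult_distrib power_divide power2_eq_square mult_ac)
      then have "pmf B S * ((\<Sum>m\<in>S. (norm (Est (S, m)))^2) / real (card S)) =
          (pmf B S * real (card S)) * (\<Sum>m\<in>S. ((norm (grad m))^2 / ((real N)^2 * (p m)^2)))"
        using c by simp
      then show "pmf B S * ((\<Sum>m\<in>S. (norm (Est (S, m)))^2) / real (card S)) =
          (\<Sum>m\<in>S. pmf B S * real (card S) * ((norm (grad m))^2 / ((real N)^2 * (p m)^2)))"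
        by (simp only: sum_distrib_left)
    qed
    also have "\<dots> = (\<Sum>m=1..N. \<Sum>S\<in>SB. (if m \<in> S then pmf B S * real (card S) * ((norm (grad m))^2 / ((real N)^2 * (p m)^2)) else 0))"
      by (rule swap)
    also have "\<dots> = (\<Sum>m=1..N. (\<Sum>j=1..N. P2 m j) * ((norm (grad m))^2 / ((real N)^2 * (p m)^2)))"
    proof (rule sum.cong[OF refl])
      fix m assume m: "m \<in> {1..N}"
      have "(\<Sum>j=1..N. P2 m j) = (\<Sum>S\<in>SB. (if m \<in> S then pmf B S * real (card S) else 0))"
      proof -
        have "(\<Sum>j=1..N. P2 m j) = (\<Sum>S\<in>SB. \<Sum>j=1..N. (if m \<in> S \<and> j \<in> S then pmf B S else 0))"
          unfolding P2S by (rule sum.swap)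
        also have "\<dots> = (\<Sum>S\<in>SB. (if m \<in> S then pmf B S * real (card S) else 0))"
        proof (rule sum.cong[OF refl])
          fix S assume S: "S \<in> SB"
          then have Ssub: "S \<subseteq> {1..N}" using SBsub by auto
          have "(\<Sum>j=1..N. (if j \<in> S then pmf B S else 0)) = pmf B S * real (card S)"
            using Ssub by (simp add: sum.If_cases Int_absorb1 Int_absorb2)
          then show "(\<Sum>j=1..N. (if m \<in> S \<and> j \<in> S then pmf B S else 0)) =
              (if m \<in> S then pmf B S * real (card S) else 0)" by auto
        qed
        finally show ?thesis .
      qed
      then show "(\<Sum>S\<in>SB. (if m \<in> S then pmf B S * real (card S) * ((norm (grad m))^2 / ((real N)^2 * (p m)^2)) else 0))
          = (\<Sum>j=1..N. P2 m j) * ((norm (grad m))^2 / ((real N)^2 * (p m)^2))"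
        by (simp only: sum_distrib_right) (rule sum.cong[OF refl], simp)
    qed
    also have "\<dots> = (1 / (real N)^2) * (\<Sum>i=1..N. (norm (grad i))^2 * (\<Sum>j=1..N. P2 i j / p i) / p i)"
      unfolding sum_distrib_left
      by (rule sum.cong[OF refl]) (simp add: sum_divide_distrib[symmetric] power2_eq_square field_simps sum_distrib_right[symmetric] mult_ac)
    finally show ?thesis .
  qed
  have "trace_cov D Est = (\<Sum>b\<in>Basis. measure_pmf.expectation D (\<lambda>\<omega>. (Est \<omega> \<bullet> b)^2)
        - (measure_pmf.expectation D (\<lambda>\<omega>. Est \<omega> \<bullet> b))^2)"
    unfolding trace_cov_def
    by (intro sum.cong refl measure_pmf.variance_eq intD)
  also have "\<dots> = measure_pmf.expectation D (\<lambda>\<omega>. (norm (Est \<omega>))^2)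
        - (\<Sum>b\<in>Basis. (((1 / real N) *\<^sub>R G) \<bullet> b)^2)"
    by (simp add: sum_subtractf mean norm_sq_basis integral_sum intD)
  also have "\<dots> = measure_pmf.expectation D (\<lambda>\<omega>. (norm (Est \<omega>))^2)
        - (1 / (real N)^2) * (norm G)^2"
    by (simp add: norm_sq_basis[of G] power_mult_distrib power_divide sum_divide_distrib)
  finally show ?thesis unfolding D_def[symmetric] sq G_def .
qed

end
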